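(* Let $|V|,S,p,d,d_w$ be positive integers. Let $C\in\mathbb{R}^{(|V|+1)\times p}$ be a token-embedding matrix whose $i$-th row is $c_i^\top$, where index $|V|+1$ is the \texttt{[MASK]} token, and let $P\in\mathbb{R}^{S\times p}$ be a positional-encoding matrix. Let $W^V\in\mathbb{R}^{d\times p}$, $W^Q,W^K\in\mathbb{R}^{d_w\times p}$, $W^O\in\mathbb{R}^{d\times p}$, $W'\in\mathbb{R}^{p\times p}$, $W''\in\mathbb{R}^{|V|\times p}$. For a masked sentence given by a matrix $\overline{X}\in\{0,1\}^{S\times(|V|+1)}$ whose rows are one-hot vectors, with masked position $m\in[S]$ (so the $m$-th row of $\overline{X}$ is the one-hot vector of index $|V|+1$) and masked (target) token $b\in[|V|]$, define the single-head single-layer attention model: $X'=\overline{X}C+P$; $X^{\mathrm{attn}}=\mathrm{softmax}\big(X'(W^Q)^\top W^K(X')^\top/\sqrt{d_w}\big)X'(W^V)^\top$ (softmax taken row-wise); $Z=X^{\mathrm{attn}}W^O$; $Z'=X'+Z$; $Z''=Z'+Z'(W')^\top$ (i.e. each row $Z'_i$ is mapped to $Z'_i+W'Z'_i$); and $\hat y=\mathrm{softmax}(W''Z''_m)\in\mathbb{R}^{|V|}$, where $Z''_m$ is the $m$-th row of $Z''$ viewed as a column vector. Let $L_{\mathrm{MLM}}(m,b)=-\log \hat y_b$ be the masked-language-modeling (cross-entropy) loss. Then there exist $g\in\mathbb{R}^{|V|}$, $D\in\mathbb{R}^{|V|\times S}$, $W^{LOV}\in\mathbb{R}^{|V|\times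 p}$ and $W^{KQ}\in\mathbb{R}^{p\times p}$, determined by the parameters $C,P,W^V,W^Q,W^K,W^O,W',W''$ alone (not depending on $\overline{X}$, $m$ or $b$), such that for every such $\overline{X},m,b$, \[ L_{\mathrm{MLM}}(m,b) = - \frac{\sum_{j=1}^S\theta(j,m)\chi(j,m,b) }{\sum_{j=1}^S \theta(j,m)} +\log\left( \sum_{k=1}^{|V|} \exp\left( \frac{\sum_{j=1}^S\theta(j,m)\chi(j,m,k) }{\sum_{j=1}^S \theta(j,m)} \right)\right), \] where \[ \theta(j,m) = \exp\left(\frac{ e_j^\top (\overline{X} C+P) W^{KQ} (c_{|V|+1} + P^\top e_m)}{\sqrt{d_w}} \right),\qquad \chi(j,m,k) = \left( W^{LOV} (\overline{X} C+P)^\top e_j + g + D e_m \right)_k, \] and $e_j\in\{0,1\}^S$ denotes the $j$-th standard basis vector.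
   Context: $\mathrm{softmax}$ of a vector $v$ is the vector with entries $e^{v_k}/\sum_l e^{v_l}$; $(v)_k$ denotes the $k$-th entry of a vector $v$; $[n]=\{1,\dots,n\}$. *)

theory Defs
  imports Complex_Main
begin

text \<open>Matrices are functions nat => nat => real, indexed from 0, with explicit
  dimension bounds.  Token indices 0..nV-1 are ordinary tokens,
  index nV is the MASK token.  A matrix M in R^(r x c) is read as M i l with
  i < r, l < c.\<close>

definition softmax :: "nat \<Rightarrow> (nat \<Rightarrow> real) \<Rightarrow> nat \<Rightarrow> real" where
  "softmax n v k = exp (v k) / (\<Sum>l<n. exp (v l))"

definition Xp :: "nat \<Rightarrow> nat \<Rightarrow> nat \<Rightarrow> (nat \<Rightarrow> nat \<Rightarrow> real) \<Rightarrow> (nat \<Rightarrow> nat \<Rightarrow> real)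
    \<Rightarrow> (nat \<Rightarrow> nat \<Rightarrow> real) \<Rightarrow> nat \<Rightarrow> nat \<Rightarrow> real" where
  "Xp nV S p C P Xbar i l = (\<Sum>t<nV+1. Xbar i t * C t l) + P i l"

definition att_score :: "nat \<Rightarrow> nat \<Rightarrow> (nat \<Rightarrow> nat \<Rightarrow> real) \<Rightarrow> (nat \<Rightarrow> nat \<Rightarrow> real)
    \<Rightarrow> (nat \<Rightarrow> nat \<Rightarrow> real) \<Rightarrow> nat \<Rightarrow> nat \<Rightarrow> real" where
  "att_score p dw WQ WK X i j =
     (\<Sum>a<dw. (\<Sum>l<p. X i l * WQ a l) * (\<Sum>l<p. X j l * WK a l)) / sqrt (real dw)"

definition Xattn :: "nat \<Rightarrow> nat \<Rightarrow> nat \<Rightarrow> nat \<Rightarrow> (nat \<Rightarrow> nat \<Rightarrow> real) \<Rightarrow> (nat \<Rightarrow> nat \<Rightarrow> real)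
    \<Rightarrow> (nat \<Rightarrow> nat \<Rightarrow> real) \<Rightarrow> (nat \<Rightarrow> nat \<Rightarrow> real) \<Rightarrow> nat \<Rightarrow> nat \<Rightarrow> real" where
  "Xattn S p d dw WV WQ WK X i a =
     (\<Sum>j<S. softmax S (att_score p dw WQ WK X i) j * (\<Sum>l<p. X j l * WV a l))"

definition mlm_loss :: "nat \<Rightarrow> nat \<Rightarrow> nat \<Rightarrow> nat \<Rightarrow> nat
    \<Rightarrow> (nat \<Rightarrow> nat \<Rightarrow> real) \<Rightarrow> (nat \<Rightarrow> nat \<Rightarrow> real) \<Rightarrow> (nat \<Rightarrow> nat \<Rightarrow> real)
    \<Rightarrow> (nat \<Rightarrow> nat \<Rightarrow> real) \<Rightarrow> (nat \<Rightarrow> nat \<Rightarrow> real) \<Rightarrow> (nat \<Rightarrow> nat \<Rightarrow> real)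
    \<Rightarrow> (nat \<Rightarrow> nat \<Rightarrow> real) \<Rightarrow> (nat \<Rightarrow> nat \<Rightarrow> real)
    \<Rightarrow> (nat \<Rightarrow> nat \<Rightarrow> real) \<Rightarrow> nat \<Rightarrow> nat \<Rightarrow> real" where
  "mlm_loss nV S p d dw C P WV WQ WK WO W1 W2 Xbar m b =
    (let X = Xp nV S p C P Xbar;
         XA = Xattn S p d dw WV WQ WK X;
         Z = (\<lambda>i l. \<Sum>a<d. XA i a * WO a l);
         Z1 = (\<lambda>i l. X i l + Z i l);
         Z2 = (\<lambda>i l. Z1 i l + (\<Sum>l'<p. W1 l l' * Z1 i l'));
         logits = (\<lambda>k. \<Sum>l<p. W2 k l * Z2 m l)
     in - ln (softmax nV logits b))"

definition masked_input :: "nat \<Rightarrow> nat \<Rightarrow> (nat \<Rightarrow> nat \<Rightarrow> real) \<Rightarrow> nat \<Rightarrow> nat \<Rightarrow> bool" where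
  "masked_input nV S Xbar m b \<longleftrightarrow>
     (\<forall>i<S. \<exists>t<nV+1. \<forall>u<nV+1. Xbar i u = (if u = t then 1 else 0)) \<and>
     m < S \<and> (\<forall>u<nV+1. Xbar m u = (if u = nV then 1 else 0)) \<and> b < nV"

end

theory Submission
  imports Defs
begin

lemma score_eq:
  fixes X Y :: "nat \<Rightarrow> real" and WQ WK :: "nat \<Rightarrow> nat \<Rightarrow> real"
  shows
  "(\<Sum>a<dw. (\<Sum>l<p. Y l * WQ a l) * (\<Sum>l<p. X l * WK a l)) =
   (\<Sum>l<p. \<Sum>l'<p. X l * (\<Sum>a<dw. WK a l * WQ a l') * Y l')"
proof -
  have "(\<Sum>a<dw. (\<Sum>l<p. Y l * WQ a l) * (\<Sum>l<p. X l * WK a l)) =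
        (\<Sum>a<dw. \<Sum>l<p. \<Sum>l'<p. X l * (WK a l * WQ a l') * Y l')"
  proof (rule sum.cong[OF refl])
    fix a
    show "(\<Sum>l<p. Y l * WQ a l) * (\<Sum>l<p. X l * WK a l) =
        (\<Sum>l<p. \<Sum>l'<p. X l * (WK a l * WQ a l') * Y l')"
      by (subst sum_product, subst sum.swap, simp add: mult_ac)
  qed
  also have "\<dots> = (\<Sum>l<p. \<Sum>a<dw. \<Sum>l'<p. X l * (WK a l * WQ a l') * Y l')"
    by (rule sum.swap)
  also have "\<dots> = (\<Sum>l<p. \<Sum>l'<p. \<Sum>a<dw. X l * (WK a l * WQ a l') * Y l')"
    by (simp add: sum.swap[of _ "{..<dw}"])
  also have "\<dots> = (\<Sum>l<p. \<Sum>l'<p. X l * (\<Sum>a<dw. WK a l * WQ a l') * Y l')"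
    by (simp add: sum_distrib_left sum_distrib_right)
  finally show ?thesis .
qed

lemma swap4:
  fixes M s :: "nat \<Rightarrow> real" and X WV WO :: "nat \<Rightarrow> nat \<Rightarrow> real"
  shows "(\<Sum>l<p. M l * (\<Sum>a<d. (\<Sum>j<S. s j * (\<Sum>l'<p. X j l' * WV a l')) * WO a l)) =
    (\<Sum>j<S. s j * (\<Sum>l'<p. (\<Sum>l<p. M l * (\<Sum>a<d. WV a l' * WO a l)) * X j l'))"
proof -
  have "(\<Sum>l<p. M l * (\<Sum>a<d. (\<Sum>j<S. s j * (\<Sum>l'<p. X j l' * WV a l')) * WO a l)) =
     (\<Sum>l<p. \<Sum>a<d. \<Sum>j<S. \<Sum>l'<p. M l * s j * X j l' * WV a l' * WO a l)"
    by (simp add: sum_distrib_left sum_distrib_right mult_ac)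
  also have "\<dots> = (\<Sum>l<p. \<Sum>j<S. \<Sum>a<d. \<Sum>l'<p. M l * s j * X j l' * WV a l' * WO a l)"
    by (rule sum.cong[OF refl], rule sum.swap)
  also have "\<dots> = (\<Sum>j<S. \<Sum>l<p. \<Sum>a<d. \<Sum>l'<p. M l * s j * X j l' * WV a l' * WO a l)"
    by (rule sum.swap)
  also have "\<dots> = (\<Sum>j<S. \<Sum>l<p. \<Sum>l'<p. \<Sum>a<d. M l * s j * X j l' * WV a l' * WO a l)"
    by (rule sum.cong[OF refl], rule sum.cong[OF refl], rule sum.swap)
  also have "\<dots> = (\<Sum>j<S. \<Sum>l'<p. \<Sum>l<p. \<Sum>a<d. M l * s j * X j l' * WV a l' * WO a l)"
    by (rule sum.cong[OF refl], rule sum.swap)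
  also have "\<dots> = (\<Sum>j<S. s j * (\<Sum>l'<p. (\<Sum>l<p. M l * (\<Sum>a<d. WV a l' * WO a l)) * X j l'))"
    by (simp add: sum_distrib_left sum_distrib_right mult_ac)
  finally show ?thesis .
qed

lemma logits_eq:
  fixes W1 W2 :: "nat \<Rightarrow> nat \<Rightarrow> real" and Z1 :: "nat \<Rightarrow> real"
  shows "(\<Sum>l<p. W2 k l * (Z1 l + (\<Sum>l'<p. W1 l l' * Z1 l'))) =
    (\<Sum>l<p. (W2 k l + (\<Sum>l0<p. W2 k l0 * W1 l0 l)) * Z1 l)"
proof -
  have "(\<Sum>l<p. W2 k l * (\<Sum>l'<p. W1 l l' * Z1 l')) = (\<Sum>l<p. \<Sum>l'<p. W2 k l * W1 l l' * Z1 l')"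
    by (simp add: sum_distrib_left mult_ac)
  also have "\<dots> = (\<Sum>l'<p. \<Sum>l<p. W2 k l * W1 l l' * Z1 l')" by (rule sum.swap)
  also have "\<dots> = (\<Sum>l<p. (\<Sum>l0<p. W2 k l0 * W1 l0 l) * Z1 l)"
    by (simp add: sum_distrib_right)
  finally show ?thesis by (simp add: algebra_simps sum.distrib)
qed

theorem lemma1:
  fixes nV S p d dw :: nat
    and C P WV WQ WK WO W1 W2 :: "nat \<Rightarrow> nat \<Rightarrow> real"
  assumes "0 < nV" "0 < S" "0 < p" "0 < d" "0 < dw"
  shows "\<exists>(g :: nat \<Rightarrow> real) (D :: nat \<Rightarrow> nat \<Rightarrow> real) (WLOV :: nat \<Rightarrow> nat \<Rightarrow> real)
            (WKQ :: nat \<Rightarrow> nat \<Rightarrow> real).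
    \<forall>Xbar m b. masked_input nV S Xbar m b \<longrightarrow>
      (let X = Xp nV S p C P Xbar;
           \<theta> = (\<lambda>j. exp ((\<Sum>l<p. \<Sum>l'<p. X j l * WKQ l l' * (C nV l' + P m l')) / sqrt (real dw)));
           \<chi> = (\<lambda>j k. (\<Sum>l<p. WLOV k l * X j l) + g k + D k m)
       in mlm_loss nV S p d dw C P WV WQ WK WO W1 W2 Xbar m b =
          - ((\<Sum>j<S. \<theta> j * \<chi> j b) / (\<Sum>j<S. \<theta> j))
          + ln (\<Sum>k<nV. exp ((\<Sum>j<S. \<theta> j * \<chi> j k) / (\<Sum>j<S. \<theta> j))))"
proof -
  define M where "M k l = W2 k l + (\<Sum>l0<p. W2 k l0 * W1 l0 l)" for k l
  define g where "g k = (\<Sum>l<p. M k l * C nV l)" for k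
  define D where "D k m = (\<Sum>l<p. M k l * P m l)" for k m
  define WLOV where "WLOV k l' = (\<Sum>l<p. M k l * (\<Sum>a<d. WV a l' * WO a l))" for k l'
  define WKQ where "WKQ l l' = (\<Sum>a<dw. WK a l * WQ a l')" for l l'
  show ?thesis
  proof (intro exI allI impI)
    fix Xbar m b
    assume mi: "masked_input nV S Xbar m b"
    define Xx where "Xx = Xp nV S p C P Xbar"
    define th where "th j = exp ((\<Sum>l<p. \<Sum>l'<p. Xx j l * WKQ l l' * (C nV l' + P m l')) / sqrt (real dw))" for j
    define ch where "ch j k = (\<Sum>l<p. WLOV k l * Xx j l) + g k + D k m" for j k
    define T where "T = (\<Sum>j<S. th j)"
    have mS: "m < S" and bnV: "b < nV" using mi unfolding masked_input_def by auto
    have Xm: "Xx m l = C nV l + P m l" for l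
    proof -
      have "\<forall>u<nV+1. Xbar m u = (if u = nV then 1 else 0)" using mi unfolding masked_input_def by auto
      then have "(\<Sum>t<nV+1. Xbar m t * C t l) = (\<Sum>t<nV+1. (if t = nV then C t l else 0))"
        by (intro sum.cong) auto
      also have "\<dots> = C nV l" by simp
      finally show ?thesis unfolding Xx_def Xp_def by simp
    qed
    have Tpos: "T > 0" unfolding T_def using \<open>0 < S\<close>
      by (intro sum_pos) (auto simp: th_def)
    have att: "att_score p dw WQ WK Xx m j = (\<Sum>l<p. \<Sum>l'<p. Xx j l * WKQ l l' * (C nV l' + P m l')) / sqrt (real dw)" for j
      unfolding att_score_def WKQ_def using score_eq[where Y="Xx m" and X="Xx j" and dw=dw and p=p and WQ=WQ and WK=WK] by (simp add: Xm)
    have sm: "softmax S (att_score p dw WQ WK Xx m) j = th j / T" for j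
      unfolding softmax_def att th_def T_def by simp
    define s where "s j = th j / T" for j
    have s1: "(\<Sum>j<S. s j) = 1" unfolding s_def using Tpos by (simp add: T_def sum_divide_distrib[symmetric])
    define Z1 where "Z1 l = Xx m l + (\<Sum>a<d. Xattn S p d dw WV WQ WK Xx m a * WO a l)" for l
    define lg where "lg k = (\<Sum>l<p. W2 k l * (Z1 l + (\<Sum>l'<p. W1 l l' * Z1 l')))" for k
    have lgk: "lg k = (\<Sum>j<S. th j * ch j k) / T" for k
    proof -
      have "lg k = (\<Sum>l<p. M k l * Z1 l)" unfolding lg_def M_def by (rule logits_eq)
      also have "\<dots> = (\<Sum>l<p. M k l * Xx m l) + (\<Sum>l<p. M k l * (\<Sum>a<d. (\<Sum>j<S. s j * (\<Sum>l'<p. Xx j l' * WV a l')) * WO a l))"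
        unfolding Z1_def Xattn_def sm s_def by (simp add: algebra_simps sum.distrib)
      also have "\<dots> = g k + D k m + (\<Sum>j<S. s j * (\<Sum>l<p. WLOV k l * Xx j l))"
        unfolding swap4 g_def D_def WLOV_def Xm by (simp add: algebra_simps sum.distrib)
      also have "\<dots> = (\<Sum>j<S. s j * ch j k)"
        unfolding ch_def using s1 by (simp add: algebra_simps sum.distrib flip: sum_distrib_left sum_distrib_right)
      also have "\<dots> = (\<Sum>j<S. th j * ch j k) / T"
        unfolding s_def by (simp add: sum_divide_distrib)
      finally show ?thesis .
    qed
    have loss: "mlm_loss nV S p d dw C P WV WQ WK WO W1 W2 Xbar m b = - ln (softmax nV lg b)"
      unfolding mlm_loss_def Let_def lg_def Z1_def Xx_def by simp
    have Epos: "(\<Sum>k<nV. exp (lg k)) > 0" using \<open>0 < nV\<close> by (intro sum_pos) auto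
    have "- ln (softmax nV lg b) = - lg b + ln (\<Sum>k<nV. exp (lg k))"
      unfolding softmax_def using Epos by (simp add: ln_div)
    then show "(let X = Xp nV S p C P Xbar;
           \<theta> = (\<lambda>j. exp ((\<Sum>l<p. \<Sum>l'<p. X j l * WKQ l l' * (C nV l' + P m l')) / sqrt (real dw)));
           \<chi> = (\<lambda>j k. (\<Sum>l<p. WLOV k l * X j l) + g k + D k m)
       in mlm_loss nV S p d dw C P WV WQ WK WO W1 W2 Xbar m b =
          - ((\<Sum>j<S. \<theta> j * \<chi> j b) / (\<Sum>j<S. \<theta> j))
          + ln (\<Sum>k<nV. exp ((\<Sum>j<S. \<theta> j * \<chi> j k) / (\<Sum>j<S. \<theta> j))))"
      unfolding Let_def loss lgk Xx_def[symmetric] th_def[symmetric] ch_def[symmetric] T_def[symmetric]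
      by simp
  qed
qed

end
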